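(* Let $G$ be a simple graph with a consistent link-coloring $c$ (in the sense of the context), and let $\alpha\neq\beta$ be two colors. Let $H$ be an $(\alpha,\beta)$ cycle, i.e. a cycle of $G$ all of whose links are colored $\alpha$ or $\beta$. If $H$ has an even number of edges, then $H$ contains an even number of variable edges; if $H$ has an odd number of edges, then $H$ contains an odd number of variable edges.
   Context: Let $G=(V,E)$ be a simple graph. Each edge $e_{i,j}=v_iv_j$ is regarded as consisting of two links (half-edges): $l_{i,j}$, incident to $v_i$, and $l_{j,i}$, incident to $v_j$. A coloring function is a map $c$ assigning to every link a color from a set $C$ of colors; write $c_{i,j}=c(l_{i,j})$, and the colored edge is the pair $(c_{i,j},c_{j,i})$. The colored edge is a constant if $c_{i,j}=c_{j,i}$ and a variable otherwise. The coloring is consistent if, at every vertex $v$, all links incident to $v$ receive distinct colors. For colors $\alpha\neq\beta$, an $(\alpha,\beta)$ cycle is a cycle in $G$ every link of which (both links of every edge of the cycle) has color in $\{\alpha,\beta\}$; its parity is the parity of its number of edges. *)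

theory Defs
  imports Main
begin

definition simple_graph :: "'v set \<Rightarrow> 'v set set \<Rightarrow> bool" where
  "simple_graph V E \<longleftrightarrow> (\<forall>e\<in>E. \<exists>u v. u \<noteq> v \<and> u \<in> V \<and> v \<in> V \<and> e = {u, v})"

text \<open>A link coloring is a function c :: 'v => 'v => 'c; c u v is the color of the
  link l_{u,v} (the half of edge uv incident to u). Only values on edges matter.\<close>

definition consistent_coloring :: "'v set set \<Rightarrow> ('v \<Rightarrow> 'v \<Rightarrow> 'c) \<Rightarrow> bool" where
  "consistent_coloring E c \<longleftrightarrow>
     (\<forall>v u w. {v, u} \<in> E \<and> {v, w} \<in> E \<and> u \<noteq> w \<longrightarrow> c v u \<noteq> c v w)"

definition cyc_next :: "'v list \<Rightarrow> nat \<Rightarrow> 'v" where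
  "cyc_next vs i = vs ! (Suc i mod length vs)"

definition is_cycle :: "'v set \<Rightarrow> 'v set set \<Rightarrow> 'v list \<Rightarrow> bool" where
  "is_cycle V E vs \<longleftrightarrow> length vs \<ge> 3 \<and> distinct vs \<and> set vs \<subseteq> V \<and>
     (\<forall>i < length vs. {vs ! i, cyc_next vs i} \<in> E)"

definition ab_cycle :: "'v set \<Rightarrow> 'v set set \<Rightarrow> ('v \<Rightarrow> 'v \<Rightarrow> 'c) \<Rightarrow> 'c \<Rightarrow> 'c \<Rightarrow> 'v list \<Rightarrow> bool" where
  "ab_cycle V E c \<alpha> \<beta> vs \<longleftrightarrow> is_cycle V E vs \<and>
     (\<forall>i < length vs. c (vs ! i) (cyc_next vs i) \<in> {\<alpha>, \<beta>} \<and> c (cyc_next vs i) (vs ! i) \<in> {\<alpha>, \<beta>})"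

definition num_variable_edges :: "('v \<Rightarrow> 'v \<Rightarrow> 'c) \<Rightarrow> 'v list \<Rightarrow> nat" where
  "num_variable_edges c vs = card {i. i < length vs \<and> c (vs ! i) (cyc_next vs i) \<noteq> c (cyc_next vs i) (vs ! i)}"

end

theory Submission
  imports Defs
begin

lemma even_sum_card: "finite A \<Longrightarrow> even (sum (h::nat\<Rightarrow>nat) A) = even (card {i\<in>A. odd (h i)})"
proof (induction A rule: finite_induct)
  case empty then show ?case by simp
next
  case (insert x A)
  have e: "{i\<in>insert x A. odd (h i)} = (if odd (h x) then insert x {i\<in>A. odd (h i)} else {i\<in>A. odd (h i)})"
    by auto
  show ?case
  proof (cases "odd (h x)")
    case True
    then have "card {i\<in>insert x A. odd (h i)} = Suc (card {i\<in>A. odd (h i)})"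
      using insert by (subst e) simp
    then show ?thesis using insert True by simp
  next
    case False
    then have "card {i\<in>insert x A. odd (h i)} = card {i\<in>A. odd (h i)}"
      by (subst e) simp
    then show ?thesis using insert False by simp
  qed
qed

lemma sum_rot: assumes "n > 0" shows "(\<Sum>i<n. (g::nat\<Rightarrow>nat) (Suc i mod n)) = (\<Sum>i<n. g i)"
proof -
  have smod: "\<And>x. x \<in> {..<n} \<Longrightarrow> Suc x mod n = (if Suc x = n then 0 else Suc x)"
    by (auto simp: mod_Suc)
  have "(\<Sum>i<n. g (Suc i mod n)) = sum g ((\<lambda>i. Suc i mod n) ` {..<n})"
  proof (rule sum.reindex[symmetric, unfolded comp_def])
    show "inj_on (\<lambda>i. Suc i mod n) {..<n}"
    proof (rule inj_onI)
      fix x y assume "x \<in> {..<n}" "y \<in> {..<n}" "Suc x mod n = Suc y mod n"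
      thus "x = y" using smod[of x] smod[of y] by (auto split: if_splits)
    qed
  qed
  also have "(\<lambda>i. Suc i mod n) ` {..<n} = {..<n}"
  proof (rule endo_inj_surj)
    show "(\<lambda>i. Suc i mod n) ` {..<n} \<subseteq> {..<n}" using assms by auto
    show "inj_on (\<lambda>i. Suc i mod n) {..<n}"
    proof (rule inj_onI)
      fix x y assume "x \<in> {..<n}" "y \<in> {..<n}" "Suc x mod n = Suc y mod n"
      thus "x = y" using smod[of x] smod[of y] by (auto split: if_splits)
    qed
  qed simp
  finally show ?thesis .
qed

theorem lemma1:
  fixes V :: "'v set" and E :: "'v set set" and c :: "'v \<Rightarrow> 'v \<Rightarrow> 'c"
    and \<alpha> \<beta> :: 'c and H :: "'v list"
  assumes "simple_graph V E"
    and "consistent_coloring E c"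
    and "\<alpha> \<noteq> \<beta>"
    and "ab_cycle V E c \<alpha> \<beta> H"
  shows "(even (length H) \<longrightarrow> even (num_variable_edges c H)) \<and>
         (odd (length H) \<longrightarrow> odd (num_variable_edges c H))"
proof -
  define n where "n = length H"
  have n3: "n \<ge> 3" and dist: "distinct H" and edges: "\<And>i. i < n \<Longrightarrow> {H ! i, cyc_next H i} \<in> E"
    and col: "\<And>i. i < n \<Longrightarrow> c (H ! i) (cyc_next H i) \<in> {\<alpha>, \<beta>} \<and> c (cyc_next H i) (H ! i) \<in> {\<alpha>, \<beta>}"
    using assms(4) unfolding ab_cycle_def is_cycle_def n_def by auto
  have cn: "\<And>i. cyc_next H i = H ! (Suc i mod n)" unfolding cyc_next_def n_def by simp
  define F where "F i = (if c (H ! i) (cyc_next H i) = \<alpha> then 1 else 0::nat)" for i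
  have key: "\<And>i. i < n \<Longrightarrow> (c (H ! i) (cyc_next H i) \<noteq> c (cyc_next H i) (H ! i)) = (F i = F (Suc i mod n))"
  proof -
    fix i assume i: "i < n"
    define j where "j = Suc i mod n"
    have j: "j < n" using n3 by (simp add: j_def)
    have ij: "i \<noteq> Suc j mod n"
    proof
      assume "i = Suc j mod n"
      then have "i = Suc (Suc i mod n) mod n" by (simp add: j_def)
      then have "i = (i + 2) mod n" by (simp add: mod_Suc_eq)
      moreover have "(i + 2) mod n \<noteq> i"
      proof (cases "i + 2 < n")
        case True then show ?thesis by simp
      next
        case False
        then have "(i + 2) mod n = (i + 2 - n) mod n" by (simp add: le_mod_geq)
        also have "\<dots> = i + 2 - n" using i n3 by (intro mod_less) simp
        finally show ?thesis using False n3 by simp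
      qed
      ultimately show False by simp
    qed
    have sj: "Suc j mod n < n" using n3 by simp
    have hne: "H ! i \<noteq> H ! (Suc j mod n)"
      using dist ij i n3 nth_eq_iff_index_eq[OF dist, of i "Suc j mod n"] sj n_def by (simp add: n_def del: mod_Suc)
    have e1: "{H ! j, H ! i} \<in> E" using edges[OF i] by (simp add: cn j_def insert_commute)
    have e2: "{H ! j, H ! (Suc j mod n)} \<in> E" using edges[OF j] by (simp add: cn)
    have d: "c (H ! j) (H ! i) \<noteq> c (H ! j) (H ! (Suc j mod n))"
      using assms(2) e1 e2 hne unfolding consistent_coloring_def by blast
    have a1: "c (H ! i) (H ! j) \<in> {\<alpha>, \<beta>}" "c (H ! j) (H ! i) \<in> {\<alpha>, \<beta>}"
      using col[OF i] by (simp_all add: cn j_def)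
    have a2: "c (H ! j) (H ! (Suc j mod n)) \<in> {\<alpha>, \<beta>}" using col[OF j] by (simp add: cn)
    show "(c (H ! i) (cyc_next H i) \<noteq> c (cyc_next H i) (H ! i)) = (F i = F (Suc i mod n))"
    proof -
      have c1: "cyc_next H i = H ! j" by (simp add: cn j_def)
      have c2: "cyc_next H j = H ! (Suc j mod n)" by (simp add: cn)
      show ?thesis unfolding F_def c1 j_def[symmetric] c2
        using a1 a2 d assms(3) by (simp only: insert_iff empty_iff) (metis (full_types) zero_neq_one)
    qed
  qed
  have S: "{i. i < length H \<and> c (H ! i) (cyc_next H i) \<noteq> c (cyc_next H i) (H ! i)}
        = {i\<in>{..<n}. F i = F (Suc i mod n)}" using key by (auto simp: n_def)
  have Fb: "\<And>i. F i \<le> 1" by (simp add: F_def)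
  have odd_iff: "\<And>i. odd (F i + F (Suc i mod n)) = (F i \<noteq> F (Suc i mod n))"
  proof -
    fix i show "odd (F i + F (Suc i mod n)) = (F i \<noteq> F (Suc i mod n))"
      using Fb[of i] Fb[of "Suc i mod n"] by (cases "F i"; cases "F (Suc i mod n)") auto
  qed
  have "(\<Sum>i<n. F i + F (Suc i mod n)) = 2 * (\<Sum>i<n. F i)"
    using sum_rot[of n F] n3 by (simp add: sum.distrib)
  then have "even (card {i\<in>{..<n}. odd (F i + F (Suc i mod n))})"
    using even_sum_card[of "{..<n}" "\<lambda>i. F i + F (Suc i mod n)"] by simp
  then have ev: "even (card {i\<in>{..<n}. F i \<noteq> F (Suc i mod n)})" using odd_iff by simp
  have part: "card {i\<in>{..<n}. F i = F (Suc i mod n)} + card {i\<in>{..<n}. F i \<noteq> F (Suc i mod n)} = n"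
  proof -
    have "card {i\<in>{..<n}. F i = F (Suc i mod n)} + card {i\<in>{..<n}. F i \<noteq> F (Suc i mod n)}
       = card ({i\<in>{..<n}. F i = F (Suc i mod n)} \<union> {i\<in>{..<n}. F i \<noteq> F (Suc i mod n)})"
      by (rule card_Un_disjoint[symmetric]) auto
    also have "\<dots> = card {..<n}" by (rule arg_cong[where f=card]) auto
    finally show ?thesis by simp
  qed
  have nv: "num_variable_edges c H = card {i\<in>{..<n}. F i = F (Suc i mod n)}"
    unfolding num_variable_edges_def S ..
  have "even n = even (card {i\<in>{..<n}. F i = F (Suc i mod n)})"
  proof -
    have g: "\<And>a b m::nat. even b \<Longrightarrow> m = a + b \<Longrightarrow> even m = even a" by simp
    show ?thesis by (rule g[OF ev part[symmetric]])
  qed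
  then show ?thesis by (simp add: nv n_def[symmetric])
qed

end
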